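(* Let $C>0$ and let $w\in C^\infty(\mathbf{R}^n\setminus\{0\})$ be homogeneous of order $\alpha$, $1<\alpha\le2$. Assume that for any two points $x,y\in\mathbf{R}^n$ with $0<|x|,|y|\le1$ there exists a matrix $A\in K_C$ with $\mathrm{Tr}(A\,D^2w(x))=\mathrm{Tr}(A\,D^2w(y))=0$. Then $w$ is a viscosity solution (in the unit ball of $\mathbf{R}^n$) of an Isaacs equation $\sup_b\inf_a L_{ab}u=0$, where $\{L_{ab}\}$ is a two-parameter family of linear operators $L_{ab}=\sum_{i,j}a_{ij}\partial^2/\partial x_i\partial x_j$ whose coefficient matrices $(a_{ij})$ all lie in $K_C$.
   Context: For $C>0$, $K_C\subset S^2(\mathbf{R}^n)$ denotes the set of real symmetric $n\times n$ matrices $A=(a_{ij})$ with $C^{-1}|\xi|^2\le\sum a_{ij}\xi_i\xi_j\le C|\xi|^2$ for all $\xi\in\mathbf{R}^n$. Viscosity solutions are in the standard sense. *)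

theory Defs
  imports "HOL-Analysis.Analysis"
begin

definition partial :: "'n::finite \<Rightarrow> (real^'n \<Rightarrow> real) \<Rightarrow> real^'n \<Rightarrow> real" where
  "partial i f x = deriv (\<lambda>t. f (x + t *\<^sub>R axis i 1)) 0"

fun Ck_on :: "nat \<Rightarrow> (real^'n::finite) set \<Rightarrow> (real^'n \<Rightarrow> real) \<Rightarrow> bool" where
  "Ck_on 0 U f = continuous_on U f"
| "Ck_on (Suc k) U f = (f differentiable_on U \<and> (\<forall>i. Ck_on k U (partial i f)))"

definition C_inf_on :: "(real^'n::finite) set \<Rightarrow> (real^'n \<Rightarrow> real) \<Rightarrow> bool" where
  "C_inf_on U f = (\<forall>k. Ck_on k U f)"

definition hess :: "(real^'n::finite \<Rightarrow> real) \<Rightarrow> real^'n \<Rightarrow> real^'n^'n" where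
  "hess f x = (\<chi> i j. partial i (partial j f) x)"

definition K :: "real \<Rightarrow> (real^'n::finite^'n) set" where
  "K C = {A. transpose A = A \<and>
            (\<forall>\<xi>. inverse C * (norm \<xi>)\<^sup>2 \<le> \<xi> \<bullet> (A *v \<xi>) \<and> \<xi> \<bullet> (A *v \<xi>) \<le> C * (norm \<xi>)\<^sup>2)}"

text \<open>Viscosity solutions of F(D^2 u) = 0 in an open set \<Omega> (F degenerate elliptic,
  nondecreasing in the matrix argument).\<close>
definition viscosity_subsolution ::
  "(real^'n::finite) set \<Rightarrow> (real^'n^'n \<Rightarrow> real) \<Rightarrow> (real^'n \<Rightarrow> real) \<Rightarrow> bool" where
  "viscosity_subsolution \<Omega> F u =
     (continuous_on \<Omega> u \<and>
      (\<forall>x0 \<in> \<Omega>. \<forall>U \<phi>. open U \<and> x0 \<in> U \<and> U \<subseteq> \<Omega> \<and> Ck_on 2 U \<phi> \<and>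
          (\<forall>x\<in>U. u x - \<phi> x \<le> u x0 - \<phi> x0) \<longrightarrow> F (hess \<phi> x0) \<ge> 0))"

definition viscosity_supersolution ::
  "(real^'n::finite) set \<Rightarrow> (real^'n^'n \<Rightarrow> real) \<Rightarrow> (real^'n \<Rightarrow> real) \<Rightarrow> bool" where
  "viscosity_supersolution \<Omega> F u =
     (continuous_on \<Omega> u \<and>
      (\<forall>x0 \<in> \<Omega>. \<forall>U \<phi>. open U \<and> x0 \<in> U \<and> U \<subseteq> \<Omega> \<and> Ck_on 2 U \<phi> \<and>
          (\<forall>x\<in>U. u x - \<phi> x \<ge> u x0 - \<phi> x0) \<longrightarrow> F (hess \<phi> x0) \<le> 0))"

definition viscosity_solution ::
  "(real^'n::finite) set \<Rightarrow> (real^'n^'n \<Rightarrow> real) \<Rightarrow> (real^'n \<Rightarrow> real) \<Rightarrow> bool" where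
  "viscosity_solution \<Omega> F u =
     (viscosity_subsolution \<Omega> F u \<and> viscosity_supersolution \<Omega> F u)"

text \<open>Isaacs operator sup_b inf_a Tr(A_ab M). A two-parameter family {A_ab} is
  represented by the collection \<B> of the sets {A_ab | a} (one for each b).\<close>
definition isaacs :: "(real^'n::finite^'n) set set \<Rightarrow> real^'n^'n \<Rightarrow> real" where
  "isaacs \<B> M = (SUP S\<in>\<B>. INF A\<in>S. trace (A ** M))"

end

theory Submission
  imports Defs
begin


definition qf :: "real^'n::finite^'n \<Rightarrow> real^'n \<Rightarrow> real" where
  "qf M v = (\<Sum>i\<in>UNIV. \<Sum>j\<in>UNIV. v$i * M$i$j * v$j)"

lemma CR0:
  fixes f :: "real^'n::finite \<Rightarrow> real"
  assumes "(f has_derivative D) (at (x + t0 *\<^sub>R v))"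
  shows "((\<lambda>t. f (x + t *\<^sub>R v)) has_real_derivative D v) (at t0)"
proof -
  have l: "linear D" using assms has_derivative_linear by blast
  have "((\<lambda>t. x + t *\<^sub>R v) has_derivative (\<lambda>t. t *\<^sub>R v)) (at t0)"
    by (auto intro!: derivative_eq_intros)
  from diff_chain_at[OF this, of f D] assms
  have "((\<lambda>t. f (x + t *\<^sub>R v)) has_derivative (\<lambda>t. D (t *\<^sub>R v))) (at t0)"
    by (simp add: o_def)
  moreover have "(\<lambda>t. D (t *\<^sub>R v)) = (\<lambda>t. D v * t)"
    using linear_scale[OF l] by (auto simp: mult.commute)
  ultimately show ?thesis unfolding has_field_derivative_def by simp
qed

lemma CR1:
  fixes f :: "real^'n::finite \<Rightarrow> real"
  assumes "(f has_derivative D) (at p)"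
  shows "partial i f p = D (axis i 1)"
proof -
  have "((\<lambda>t. f (p + t *\<^sub>R axis i 1)) has_real_derivative D (axis i 1)) (at 0)"
    using CR0[of f D p 0 "axis i 1"] assms by simp
  then show ?thesis unfolding partial_def by (rule DERIV_imp_deriv)
qed

lemma lin_basis:
  fixes D :: "real^'n::finite \<Rightarrow> real"
  assumes "linear D"
  shows "D v = (\<Sum>j\<in>UNIV. v$j * D (axis j 1))"
proof -
  have "(\<Sum>j\<in>UNIV. v$j *\<^sub>R axis j 1) = v"
    using basis_expansion[of v] by (simp add: scalar_mult_eq_scaleR)
  then have "D v = D (\<Sum>j\<in>UNIV. v$j *\<^sub>R axis j 1)" by (rule arg_cong[symmetric])
  also have "\<dots> = (\<Sum>j\<in>UNIV. v$j * D (axis j 1))"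
    using assms by (simp add: linear_sum linear_scale)
  finally show ?thesis .
qed

lemma CR3:
  fixes f :: "real^'n::finite \<Rightarrow> real"
  assumes "f differentiable (at (x + t0 *\<^sub>R v))"
  shows "((\<lambda>t. f (x + t *\<^sub>R v)) has_real_derivative (\<Sum>j\<in>UNIV. v$j * partial j f (x + t0 *\<^sub>R v))) (at t0)"
proof -
  obtain D where D: "(f has_derivative D) (at (x + t0 *\<^sub>R v))"
    using assms unfolding differentiable_def by blast
  have "D v = (\<Sum>j\<in>UNIV. v$j * partial j f (x + t0 *\<^sub>R v))"
    using lin_basis[OF has_derivative_linear[OF D], of v] CR1[OF D, symmetric] by simp
  with CR0[OF D] show ?thesis by simp
qed

lemma SD:
  fixes G G' :: "real \<Rightarrow> real"
  assumes "\<delta> > 0" "\<forall>t. \<bar>t\<bar> < \<delta> \<longrightarrow> (G has_real_derivative G' t) (at t)"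
    "(G' has_real_derivative c) (at 0)" "\<forall>t. \<bar>t\<bar> < \<delta> \<longrightarrow> G 0 \<le> G t"
  shows "c \<ge> 0"
proof (rule ccontr)
  assume "\<not> c \<ge> 0" then have c: "c < 0" by simp
  have d0: "(G has_real_derivative G' 0) (at 0)" using assms(1,2) by simp
  have g0: "G' 0 = 0"
    by (rule DERIV_local_min[OF d0 assms(1)]) (use assms(4) in simp)
  obtain d where d: "d > 0" "\<And>h. 0 < h \<Longrightarrow> h < d \<Longrightarrow> G' 0 > G' (0 + h)"
    using DERIV_neg_dec_right[OF assms(3) c] by blast
  define t where "t = min d \<delta> / 2"
  have t: "0 < t" "t < d" "t < \<delta>" using d assms(1) by (auto simp: t_def)
  have "\<And>x. 0 \<le> x \<Longrightarrow> x \<le> t \<Longrightarrow> (G has_real_derivative G' x) (at x)"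
  proof -
    fix x assume "0 \<le> x" "x \<le> t"
    then have "\<bar>x\<bar> < \<delta>" using t by auto
    then show "(G has_real_derivative G' x) (at x)" using assms(2) by blast
  qed
  from MVT2[OF t(1) this] obtain z where z: "z > 0" "z < t" "G t - G 0 = (t - 0) * G' z" by blast
  have "G' z < 0" using d(2)[of z] z t g0 by simp
  then have "t * G' z < 0" using t(1) by (simp add: mult_pos_neg)
  then have "G t < G 0" using z(3) by simp
  moreover have "G 0 \<le> G t" using assms(4) t(1,3) by simp
  ultimately show False by simp
qed

lemma Ck2_D:
  assumes "Ck_on 2 U f" "open U" "x \<in> U"
  shows "f differentiable (at x)" "partial i f differentiable (at x)"
    "continuous_on U (partial j (partial i f))"
  using assms by (auto simp: numeral_2_eq_2 differentiable_on_eq_differentiable_at)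

lemma qf_swap:
  "qf H v = (\<Sum>j\<in>UNIV. v$j * (\<Sum>i\<in>UNIV. v$i * H$i$j))"
  unfolding qf_def
  by (subst sum.swap) (simp add: sum_distrib_left sum_distrib_right mult_ac)

lemma L2:
  fixes \<psi> g :: "real^'n::finite \<Rightarrow> real"
  assumes "open U" "a \<in> U" "Ck_on 2 U \<psi>" "open V" "z \<in> V" "Ck_on 2 V g" "\<delta> > 0"
   "\<forall>t. \<bar>t\<bar> < \<delta> \<longrightarrow> \<sigma>*(\<psi> a - g z) \<le> \<sigma>*(\<psi>(a + t *\<^sub>R v) - g(z + t *\<^sub>R v)) + \<beta>*t + \<gamma>*t\<^sup>2"
  shows "\<sigma>*(qf (hess \<psi> a) v - qf (hess g z) v) + 2*\<gamma> \<ge> 0"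
proof -
  obtain e1 where e1: "e1 > 0" "ball a e1 \<subseteq> U" using assms(1,2) open_contains_ball by blast
  obtain e2 where e2: "e2 > 0" "ball z e2 \<subseteq> V" using assms(4,5) open_contains_ball by blast
  define d where "d = min \<delta> (min e1 e2 / (norm v + 1))"
  have nv: "norm v + 1 > 0" using norm_ge_zero[of v] by linarith
  then have d: "d > 0" using e1 e2 assms(7) by (simp add: d_def)
  have inU: "a + t *\<^sub>R v \<in> U" "z + t *\<^sub>R v \<in> V" if "\<bar>t\<bar> < d" for t
  proof -
    have "\<bar>t\<bar> * norm v \<le> \<bar>t\<bar> * (norm v + 1)" by (simp add: mult_left_mono)
    also have "\<dots> < min e1 e2"
      using that nv by (simp add: d_def less_divide_eq)
    finally have n: "norm (t *\<^sub>R v) < e1" "norm (t *\<^sub>R v) < e2" by auto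
    show "a + t *\<^sub>R v \<in> U" using e1(2) n(1) by (auto simp: dist_norm)
    show "z + t *\<^sub>R v \<in> V" using e2(2) n(2) by (auto simp: dist_norm)
  qed
  define Dp where "Dp t = (\<Sum>j\<in>UNIV. v$j * partial j \<psi> (a + t *\<^sub>R v))" for t
  define Dg where "Dg t = (\<Sum>j\<in>UNIV. v$j * partial j g (z + t *\<^sub>R v))" for t
  define G where "G t = \<sigma>*(\<psi>(a + t *\<^sub>R v) - g(z + t *\<^sub>R v)) + \<beta>*t + \<gamma>*t\<^sup>2" for t
  define G' where "G' t = \<sigma>*(Dp t - Dg t) + \<beta> + 2*\<gamma>*t" for t
  have dG: "(G has_real_derivative G' t) (at t)" if "\<bar>t\<bar> < d" for t
  proof -
    have h1: "((\<lambda>t. \<psi> (a + t *\<^sub>R v)) has_real_derivative Dp t) (at t)"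
      unfolding Dp_def by (rule CR3) (rule Ck2_D(1)[OF assms(3,1) inU(1)[OF that]])
    have h2: "((\<lambda>t. g (z + t *\<^sub>R v)) has_real_derivative Dg t) (at t)"
      unfolding Dg_def by (rule CR3) (rule Ck2_D(1)[OF assms(6,4) inU(2)[OF that]])
    show ?thesis unfolding G_def G'_def
      by (auto intro!: derivative_eq_intros h1 h2)
  qed
  define c where "c = \<sigma>*((\<Sum>j\<in>UNIV. v$j * (\<Sum>i\<in>UNIV. v$i * partial i (partial j \<psi>) a))
      - (\<Sum>j\<in>UNIV. v$j * (\<Sum>i\<in>UNIV. v$i * partial i (partial j g) z))) + 2*\<gamma>"
  have dG': "(G' has_real_derivative c) (at 0)"
  proof -
    have h1: "((\<lambda>t. partial j \<psi> (a + t *\<^sub>R v)) has_real_derivative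
       (\<Sum>i\<in>UNIV. v$i * partial i (partial j \<psi>) a)) (at 0)" for j
      using CR3[of "partial j \<psi>" a 0 v] Ck2_D(2)[OF assms(3,1,2)] by simp
    have h2: "((\<lambda>t. partial j g (z + t *\<^sub>R v)) has_real_derivative
       (\<Sum>i\<in>UNIV. v$i * partial i (partial j g) z)) (at 0)" for j
      using CR3[of "partial j g" z 0 v] Ck2_D(2)[OF assms(6,4,5)] by simp
    have h1': "(Dp has_real_derivative (\<Sum>j\<in>UNIV. v$j * (\<Sum>i\<in>UNIV. v$i * partial i (partial j \<psi>) a))) (at 0)"
      unfolding Dp_def by (auto intro!: DERIV_sum DERIV_cmult h1)
    have h2': "(Dg has_real_derivative (\<Sum>j\<in>UNIV. v$j * (\<Sum>i\<in>UNIV. v$i * partial i (partial j g) z))) (at 0)"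
      unfolding Dg_def by (auto intro!: DERIV_sum DERIV_cmult h2)
    show ?thesis unfolding G'_def c_def
      by (auto intro!: derivative_eq_intros h1' h2')
  qed
  have "c \<ge> 0"
  proof (rule SD[OF d _ dG'])
    show "\<forall>t. \<bar>t\<bar> < d \<longrightarrow> (G has_real_derivative G' t) (at t)" using dG by blast
    show "\<forall>t. \<bar>t\<bar> < d \<longrightarrow> G 0 \<le> G t"
      using assms(8) by (auto simp: G_def d_def)
  qed
  moreover have "c = \<sigma>*(qf (hess \<psi> a) v - qf (hess g z) v) + 2*\<gamma>"
    unfolding c_def qf_swap hess_def by simp
  ultimately show ?thesis by simp
qed






lemma qf_inner: "x \<bullet> (A *v x) = qf A x"
  by (simp add: inner_vec_def matrix_vector_mult_def qf_def sum_distrib_left mult_ac)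

lemma dsum1: "(\<Sum>i\<in>(UNIV::'n::finite set). (if i = k then c else 0) * f i) = c * (f k::real)"
proof -
  have "(\<Sum>i\<in>(UNIV::'n set). (if i = k then c else 0) * f i) = (\<Sum>i\<in>UNIV. if i = k then c * f i else 0)"
    by (rule sum.cong) auto
  also have "\<dots> = c * f k" by (simp add: sum.delta')
  finally show ?thesis .
qed

lemma dsum2: "(\<Sum>i\<in>(UNIV::'n::finite set). f i * (if i = k then c else 0)) = (f k::real) * c"
  using dsum1[of k c f] by (simp add: mult.commute)

lemma qf_add_axis:
  assumes "\<forall>i j. A$i$j = A$j$i"
  shows "qf A (x + c *\<^sub>R axis k 1) = qf A x + 2*c*(\<Sum>j\<in>UNIV. A$k$j * x$j) + c\<^sup>2*A$k$k"
proof -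
  define d where "d i = (if i = k then c else 0)" for i
  have e: "(x + c *\<^sub>R axis k 1)$i = x$i + d i" for i
    by (simp add: axis_def d_def)
  have "qf A (x + c *\<^sub>R axis k 1) = (\<Sum>i\<in>UNIV. \<Sum>j\<in>UNIV. x$i * A$i$j * x$j
     + d i * (A$i$j * x$j) + (x$i * A$i$j) * d j + d i * (A$i$j * d j))"
    unfolding qf_def e by (rule sum.cong[OF refl], rule sum.cong[OF refl]) (simp add: algebra_simps)
  also have "\<dots> = qf A x + (\<Sum>i\<in>UNIV. d i * (\<Sum>j\<in>UNIV. A$i$j * x$j))
     + (\<Sum>j\<in>UNIV. (\<Sum>i\<in>UNIV. x$i * A$i$j) * d j) + (\<Sum>i\<in>UNIV. d i * (\<Sum>j\<in>UNIV. A$i$j * d j))"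
    unfolding qf_def sum.distrib sum_distrib_left sum_distrib_right
    by (simp add: sum.swap[where A=UNIV and B=UNIV and g="\<lambda>i j. x$i * A$i$j * d j"])
  also have "\<dots> = qf A x + c*(\<Sum>j\<in>UNIV. A$k$j * x$j) + (\<Sum>i\<in>UNIV. x$i * A$i$k) * c + c * (A$k$k * c)"
    unfolding d_def dsum1 dsum2 ..
  also have "(\<Sum>i\<in>UNIV. x$i * A$i$k) = (\<Sum>j\<in>UNIV. A$k$j * x$j)"
    using assms by (simp add: mult_ac)
  finally show ?thesis by (simp add: power2_eq_square algebra_simps)
qed

lemma qf_axis: "qf A (axis k 1) = A$k$k"
proof -
  have "qf A (axis k 1) = (\<Sum>i\<in>UNIV. (if i = k then 1 else 0) * (\<Sum>j\<in>UNIV. A$i$j * (if j = k then 1 else 0)))"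
    unfolding qf_def by (simp add: axis_def sum_distrib_left mult_ac)
  also have "\<dots> = A$k$k" unfolding dsum1 dsum2 by simp
  finally show ?thesis .
qed

lemma qf_rank1:
  "qf (\<chi> i j. A$i$j - b$i*b$j/s) x = qf A x - (\<Sum>i\<in>UNIV. b$i*x$i)\<^sup>2/s"
proof -
  have "qf (\<chi> i j. A$i$j - b$i*b$j/s) x = (\<Sum>i\<in>UNIV. \<Sum>j\<in>UNIV. x$i * A$i$j * x$j - (b$i*x$i)*(b$j*x$j)/s)"
    unfolding qf_def by (simp add: algebra_simps)
  also have "\<dots> = qf A x - (\<Sum>i\<in>UNIV. \<Sum>j\<in>UNIV. (b$i*x$i)*(b$j*x$j))/s"
    unfolding qf_def by (simp add: sum_subtractf sum_divide_distrib)
  also have "(\<Sum>i\<in>UNIV. \<Sum>j\<in>UNIV. (b$i*x$i)*(b$j*x$j)) = (\<Sum>i\<in>UNIV. b$i*x$i)\<^sup>2"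
    by (simp add: power2_eq_square sum_product)
  finally show ?thesis .
qed

lemma sum_insert2:
  assumes "finite I" "k \<notin> I"
  shows "(\<Sum>i\<in>insert k I. \<Sum>j\<in>insert k I. f i j) =
    f k k + (\<Sum>j\<in>I. f k j) + (\<Sum>i\<in>I. f i k) + (\<Sum>i\<in>I. \<Sum>j\<in>I. f i j)"
  using assms by (simp add: sum.distrib algebra_simps)

lemma TI_gen:
  fixes A N :: "real^'n::finite^'n"
  assumes "finite I"
  shows "(\<forall>i j. A$i$j = A$j$i) \<Longrightarrow> (\<forall>x. (\<forall>i. i \<notin> I \<longrightarrow> x$i = 0) \<longrightarrow> qf A x \<ge> 0)
    \<Longrightarrow> (\<forall>x. qf N x \<ge> 0) \<Longrightarrow> (\<Sum>i\<in>I. \<Sum>j\<in>I. A$i$j * N$j$i) \<ge> 0"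
  using assms
proof (induction I arbitrary: A rule: finite_induct)
  case empty
  then show ?case by simp
next
  case (insert k I)
  note sym = insert.prems(1) and psd = insert.prems(2) and Np = insert.prems(3)
  let ?J = "insert k I"
  have akk: "A$k$k \<ge> 0"
  proof -
    have "\<forall>i. i \<notin> ?J \<longrightarrow> axis k 1 $ i = 0" by (simp add: axis_def)
    then have "qf A (axis k 1) \<ge> 0" using psd by blast
    then show ?thesis by (simp add: qf_axis)
  qed
  show ?case
  proof (cases "A$k$k = 0")
    case True
    have row: "A$k$j = 0" if "j \<in> I" for j
    proof (rule ccontr)
      assume nz: "A$k$j \<noteq> 0"
      define t where "t = -(A$j$j + 1)/(2*A$k$j)"
      have jk: "j \<noteq> k" using that insert.hyps by auto
      have "qf A (axis j 1 + t *\<^sub>R axis k 1) = A$j$j + 2*t*A$k$j"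
      proof -
        have "(\<Sum>l\<in>UNIV. A$k$l * axis j 1 $ l) = A$k$j"
          using dsum2[of "\<lambda>l. A$k$l" j 1] by (simp add: axis_def)
        then show ?thesis using qf_add_axis[OF sym, of "axis j 1" t k] True by (simp add: qf_axis)
      qed
      also have "\<dots> = -1" using nz by (simp add: t_def field_simps)
      finally have "qf A (axis j 1 + t *\<^sub>R axis k 1) < 0" by simp
      moreover have "qf A (axis j 1 + t *\<^sub>R axis k 1) \<ge> 0"
      proof -
        have "\<forall>i. i \<notin> ?J \<longrightarrow> (axis j 1 + t *\<^sub>R axis k 1) $ i = 0"
          using that by (auto simp: axis_def)
        then show ?thesis using psd by blast
      qed
      ultimately show False by simp
    qed
    have col: "A$j$k = 0" if "j \<in> I" for j using row[OF that] sym by metis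
    have "(\<Sum>i\<in>?J. \<Sum>j\<in>?J. A$i$j * N$j$i) = (\<Sum>i\<in>I. \<Sum>j\<in>I. A$i$j * N$j$i)"
      using sum_insert2[OF insert.hyps, of "\<lambda>i j. A$i$j * N$j$i"] True row col by simp
    also have "\<dots> \<ge> 0"
      by (rule insert.IH[OF sym _ Np]) (use psd in auto)
    finally show ?thesis .
  next
    case False
    with akk have pos: "A$k$k > 0" by simp
    define b where "b = (\<chi> i. if i \<in> ?J then A$i$k else 0)"
    define A' where "A' = (\<chi> i j. A$i$j - b$i*b$j/A$k$k)"
    have symA': "\<forall>i j. A'$i$j = A'$j$i" using sym by (simp add: A'_def mult.commute)
    have rowA': "A'$k$j = 0" "A'$j$k = 0" if "j \<in> I" for j
      using that pos sym by (auto simp: A'_def b_def)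
    have kkA': "A'$k$k = 0" using pos by (simp add: A'_def b_def power2_eq_square)
    have psdA': "qf A' x \<ge> 0" if supp: "\<forall>i. i \<notin> I \<longrightarrow> x$i = 0" for x
    proof -
      define r where "r = (\<Sum>j\<in>UNIV. A$k$j * x$j)"
      have br: "(\<Sum>i\<in>UNIV. b$i*x$i) = r"
        unfolding r_def b_def by (rule sum.cong) (use supp sym in auto)
      have "qf A (x + (-r/A$k$k) *\<^sub>R axis k 1) = qf A x - r\<^sup>2/A$k$k"
        using qf_add_axis[OF sym, of x "-r/A$k$k" k, unfolded r_def[symmetric]] pos
        by (simp add: power2_eq_square field_simps)
      also have "\<dots> = qf A' x" unfolding A'_def qf_rank1 br ..
      finally have e: "qf A' x = qf A (x + (-r/A$k$k) *\<^sub>R axis k 1)" by simp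
      show ?thesis unfolding e
        by (rule psd[rule_format]) (use supp in \<open>auto simp: axis_def\<close>)
    qed
    have split: "(\<Sum>i\<in>?J. \<Sum>j\<in>?J. A$i$j * N$j$i) =
        (\<Sum>i\<in>?J. \<Sum>j\<in>?J. A'$i$j * N$j$i) + (\<Sum>i\<in>?J. \<Sum>j\<in>?J. b$i*b$j*N$j$i)/A$k$k"
      unfolding A'_def using pos
      by (simp add: algebra_simps sum.distrib sum_subtractf sum_divide_distrib diff_divide_distrib)
    have p1: "(\<Sum>i\<in>?J. \<Sum>j\<in>?J. A'$i$j * N$j$i) \<ge> 0"
    proof -
      have "(\<Sum>i\<in>?J. \<Sum>j\<in>?J. A'$i$j * N$j$i) = (\<Sum>i\<in>I. \<Sum>j\<in>I. A'$i$j * N$j$i)"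
        using sum_insert2[OF insert.hyps, of "\<lambda>i j. A'$i$j * N$j$i"] rowA' kkA' by simp
      also have "\<dots> \<ge> 0" by (rule insert.IH[OF symA' _ Np]) (use psdA' in auto)
      finally show ?thesis .
    qed
    have p2: "(\<Sum>i\<in>?J. \<Sum>j\<in>?J. b$i*b$j*N$j$i) \<ge> 0"
    proof -
      have "(\<Sum>i\<in>?J. \<Sum>j\<in>?J. b$i*b$j*N$j$i) = (\<Sum>i\<in>UNIV. \<Sum>j\<in>UNIV. b$i*b$j*N$j$i)"
      proof -
        have inner: "(\<Sum>j\<in>?J. b$i*b$j*N$j$i) = (\<Sum>j\<in>UNIV. b$i*b$j*N$j$i)" for i
          by (rule sum.mono_neutral_left) (auto simp: b_def)
        show ?thesis unfolding inner
          by (rule sum.mono_neutral_left) (auto simp: b_def)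
      qed
      also have "\<dots> = qf N b" unfolding qf_def
        by (subst sum.swap) (simp add: mult_ac)
      finally show ?thesis using Np by simp
    qed
    show ?thesis unfolding split using p1 p2 pos by simp
  qed
qed



definition SI :: "'a set \<Rightarrow> ('a \<Rightarrow> 'a \<Rightarrow> real) \<Rightarrow> real" where
  "SI P f = (SUP y\<in>P. INF x\<in>P. f x y)"

lemma INF_bnd:
  assumes "P \<noteq> {}" "\<forall>x\<in>P. \<bar>f x\<bar> \<le> (B::real)"
  shows "\<bar>INF x\<in>P. f x\<bar> \<le> B" "bdd_below (f ` P)"
proof -
  show bb: "bdd_below (f ` P)" using assms(2) by (intro bdd_belowI[of _ "-B"]) auto
  obtain x0 where x0: "x0 \<in> P" using assms(1) by auto
  have "(INF x\<in>P. f x) \<le> f x0" by (rule cINF_lower[OF bb x0])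
  moreover have "-B \<le> (INF x\<in>P. f x)" using assms by (intro cINF_greatest) auto
  ultimately show "\<bar>INF x\<in>P. f x\<bar> \<le> B" using assms(2) x0 by force
qed

lemma SI_mono:
  assumes "P \<noteq> {}" "\<forall>x\<in>P. \<forall>y\<in>P. \<bar>g x y\<bar> \<le> B" "\<forall>x\<in>P. \<forall>y\<in>P. \<bar>f x y\<bar> \<le> B'"
    "\<forall>x\<in>P. \<forall>y\<in>P. f x y \<le> g x y + c"
  shows "SI P f \<le> SI P g + c"
proof -
  have gb: "\<bar>INF x\<in>P. g x y\<bar> \<le> B" if "y \<in> P" for y using INF_bnd(1)[OF assms(1), of "\<lambda>x. g x y" B] assms(2) that by auto
  have bdd: "bdd_above ((\<lambda>y. INF x\<in>P. g x y) ` P)"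
    using gb by (intro bdd_aboveI[of _ B]) force
  have fi: "(INF x\<in>P. f x y) \<le> (INF x\<in>P. g x y) + c" if y: "y \<in> P" for y
  proof -
    have fb: "bdd_below ((\<lambda>x. f x y) ` P)" using INF_bnd(2)[OF assms(1), of "\<lambda>x. f x y" B'] assms(3) y by auto
    have "(INF x\<in>P. f x y) - c \<le> (INF x\<in>P. g x y)"
    proof (rule cINF_greatest[OF assms(1)])
      fix x assume x: "x \<in> P"
      have "(INF x\<in>P. f x y) \<le> f x y" by (rule cINF_lower[OF fb x])
      then show "(INF x\<in>P. f x y) - c \<le> g x y" using assms(4) x y by fastforce
    qed
    then show ?thesis by simp
  qed
  have "SI P f \<le> (SUP y\<in>P. INF x\<in>P. g x y) + c"
    unfolding SI_def
  proof (rule cSUP_least[OF assms(1)])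
    fix y assume y: "y \<in> P"
    have "(INF x\<in>P. g x y) \<le> (SUP y\<in>P. INF x\<in>P. g x y)" by (rule cSUP_upper[OF y bdd])
    then show "(INF x\<in>P. f x y) \<le> (SUP y\<in>P. INF x\<in>P. g x y) + c" using fi[OF y] by simp
  qed
  then show ?thesis unfolding SI_def .
qed

lemma SI_le0:
  assumes "P \<noteq> {}" "\<forall>x\<in>P. \<forall>y\<in>P. \<bar>f x y\<bar> \<le> B" "\<forall>y\<in>P. \<exists>x\<in>P. f x y \<le> 0"
  shows "SI P f \<le> 0"
  unfolding SI_def
proof (rule cSUP_least[OF assms(1)])
  fix y assume y: "y \<in> P"
  then obtain x where x: "x \<in> P" "f x y \<le> 0" using assms(3) by auto
  have fb: "bdd_below ((\<lambda>x. f x y) ` P)" using INF_bnd(2)[OF assms(1), of "\<lambda>x. f x y" B] assms(2) y by auto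
  show "(INF x\<in>P. f x y) \<le> 0" using cINF_lower[OF fb x(1)] x(2) by simp
qed

lemma SI_ge0:
  assumes "P \<noteq> {}" "\<forall>x\<in>P. \<forall>y\<in>P. \<bar>f x y\<bar> \<le> B" "y \<in> P" "\<forall>x\<in>P. f x y \<ge> 0"
  shows "SI P f \<ge> 0"
proof -
  have gb: "\<bar>INF x\<in>P. f x y\<bar> \<le> B" if "y \<in> P" for y using INF_bnd(1)[OF assms(1), of "\<lambda>x. f x y" B] assms(2) that by auto
  have bdd: "bdd_above ((\<lambda>y. INF x\<in>P. f x y) ` P)"
    using gb by (intro bdd_aboveI[of _ B]) force
  have "0 \<le> (INF x\<in>P. f x y)" using assms(4) by (intro cINF_greatest[OF assms(1)]) auto
  also have "\<dots> \<le> SI P f" unfolding SI_def by (rule cSUP_upper[OF assms(3) bdd])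
  finally show ?thesis .
qed



lemma trace_sum: "trace (A ** M) = (\<Sum>i\<in>UNIV. \<Sum>j\<in>UNIV. A$i$j * M$j$i)"
  by (simp add: trace_def matrix_matrix_mult_def)

lemma K_sym: assumes "A \<in> K C" shows "A$i$j = A$j$i"
proof -
  have "transpose A = A" using assms by (simp add: K_def)
  then have "A$i$j = (transpose A)$i$j" by simp
  also have "\<dots> = A$j$i" by (simp add: transpose_def)
  finally show ?thesis .
qed

lemma K_psd: "C > 0 \<Longrightarrow> A \<in> K C \<Longrightarrow> qf A x \<ge> 0"
  unfolding K_def qf_inner[symmetric]
  by (metis (mono_tags, lifting) inverse_positive_iff_positive mem_Collect_eq order_trans
      zero_le_power2 mult_nonneg_nonneg less_imp_le)

lemma K_le: "A \<in> K C \<Longrightarrow> qf A x \<le> C * (norm x)\<^sup>2"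
  unfolding K_def qf_inner[symmetric] by auto

lemma K_entry:
  fixes A :: "real^'n::finite^'n"
  assumes C: "C > 0" and A: "A \<in> K C"
  shows "\<bar>A$i$j\<bar> \<le> C"
proof -
  have sym: "\<forall>i j. A$i$j = A$j$i" using K_sym[OF A] by blast
  have q: "qf A (axis i 1 + c *\<^sub>R axis j 1) = A$i$i + 2*c*A$j$i + c\<^sup>2*A$j$j" for c
  proof -
    have "(\<Sum>l\<in>UNIV. A$j$l * axis i 1 $ l) = A$j$i"
      using dsum2[of "\<lambda>l. A$j$l" i 1] by (simp add: axis_def)
    then show ?thesis using qf_add_axis[OF sym, of "axis i 1" c j] by (simp add: qf_axis)
  qed
  have n: "(norm (axis i 1 + c *\<^sub>R axis j 1 :: real^'n))\<^sup>2 \<le> 4" if "\<bar>c\<bar> = 1" for c :: real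
  proof -
    have "norm (axis i 1 + c *\<^sub>R axis j 1 :: real^'n) \<le> 2"
      using norm_triangle_ineq[of "axis i 1 :: real^'n" "c *\<^sub>R axis j 1"] that by (simp add: norm_axis_1)
    then show ?thesis using norm_ge_zero power_mono[of _ 2 2] by fastforce
  qed
  have a: "qf A (axis i 1 + c *\<^sub>R axis j 1) \<le> 4*C" if "\<bar>c\<bar> = 1" for c
  proof -
    have "C * (norm (axis i 1 + c *\<^sub>R axis j 1 :: real^'n))\<^sup>2 \<le> C*4"
      by (rule mult_left_mono[OF n[OF that]]) (use C in simp)
    then show ?thesis using K_le[OF A, of "axis i 1 + c *\<^sub>R axis j 1"] by simp
  qed
  have a1: "qf A (axis i 1 + 1 *\<^sub>R axis j 1) \<le> 4*C" using a[of 1] by simp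
  have a2: "qf A (axis i 1 + (-1) *\<^sub>R axis j 1) \<le> 4*C" using a[of "-1"] by simp
  have b1: "qf A (axis i 1 + 1 *\<^sub>R axis j 1) \<ge> 0" by (rule K_psd[OF C A])
  have b2: "qf A (axis i 1 + (-1) *\<^sub>R axis j 1) \<ge> 0" by (rule K_psd[OF C A])
  show ?thesis using a1 a2 b1 b2 q[of 1] q[of "-1"] sym by (simp add: abs_le_iff) 
qed

lemma TI:
  assumes "C > 0" "A \<in> K C" "\<forall>x. qf N x \<ge> 0"
  shows "trace (A ** N) \<ge> 0"
  unfolding trace_sum
  by (rule TI_gen) (use assms K_sym K_psd in auto)

definition nm :: "real^'n::finite^'n \<Rightarrow> real" where
  "nm E = (\<Sum>i\<in>UNIV. \<Sum>j\<in>UNIV. \<bar>E$i$j\<bar>)"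

lemma trace_bound:
  assumes "C > 0" "A \<in> K C"
  shows "\<bar>trace (A ** E)\<bar> \<le> C * nm E"
proof -
  have "\<bar>trace (A ** E)\<bar> \<le> (\<Sum>i\<in>UNIV. \<Sum>j\<in>UNIV. \<bar>A$i$j * E$j$i\<bar>)"
    unfolding trace_sum by (rule order_trans[OF sum_abs]) (intro sum_mono sum_abs)
  also have "\<dots> \<le> (\<Sum>i\<in>UNIV. \<Sum>j\<in>UNIV. C * \<bar>E$j$i\<bar>)"
    by (intro sum_mono) (simp add: abs_mult mult_right_mono K_entry[OF assms])
  also have "\<dots> = C * nm E" unfolding nm_def sum_distrib_left by (subst sum.swap) simp
  finally show ?thesis .
qed

lemma trace_addR: fixes A M N :: "real^'n::finite^'n" shows "trace (A ** (M + N)) = trace (A ** M) + trace (A ** N)"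
  unfolding trace_sum by (simp add: algebra_simps sum.distrib)

lemma trace_diffR: fixes A M N :: "real^'n::finite^'n" shows "trace (A ** (M - N)) = trace (A ** M) - trace (A ** N)"
  using trace_addR[of A "M - N" N] by (simp add: algebra_simps)

lemma qf_diff: "qf (M - N) x = qf M x - qf N x"
  unfolding qf_def by (simp add: algebra_simps sum_subtractf)

lemma qf_add: "qf (M + N) x = qf M x + qf N x"
  unfolding qf_def by (simp add: algebra_simps sum.distrib)

lemma qf_scal: "qf (c *\<^sub>R mat 1) x = c * (norm x)\<^sup>2"
proof -
  have "qf (c *\<^sub>R M) x = c * qf M x" for M
    unfolding qf_def by (simp add: sum_distrib_left mult_ac)
  moreover have "qf (mat 1) x = (norm x)\<^sup>2"
    unfolding qf_inner[symmetric] by (simp add: power2_norm_eq_inner)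
  ultimately show ?thesis by simp
qed

lemma nm_add: "nm (M + N) \<le> nm M + nm N"
  unfolding nm_def sum.distrib[symmetric] by (intro sum_mono) (simp add: abs_triangle_ineq)

lemma nm_diff: "nm (M - N) \<le> nm M + nm N"
  unfolding nm_def sum.distrib[symmetric] by (intro sum_mono) (simp add: abs_triangle_ineq4)

lemma nm_scal: "nm (c *\<^sub>R mat 1 :: real^'n::finite^'n) = real CARD('n) * \<bar>c\<bar>"
proof -
  have "nm (c *\<^sub>R mat 1 :: real^'n^'n) = (\<Sum>i\<in>(UNIV::'n set). \<Sum>j\<in>UNIV. if j = i then \<bar>c\<bar> else 0)"
    unfolding nm_def by (intro sum.cong refl) (simp add: mat_def)
  also have "\<dots> = real CARD('n) * \<bar>c\<bar>" by simp
  finally show ?thesis .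
qed



lemma w_facts:
  fixes w :: "real^'n::finite \<Rightarrow> real"
  assumes a1: "1 < \<alpha>" and Cinf: "C_inf_on (-{0}) w"
    and hom: "\<forall>t>0. \<forall>x. w (t *\<^sub>R x) = t powr \<alpha> * w x"
  shows "w 0 = 0" "Ck_on 2 (-{0}) w" "(w has_derivative (\<lambda>_. 0)) (at 0)" "continuous_on UNIV w"
proof -
  have "w 0 = 2 powr \<alpha> * w 0" using hom[rule_format, of 2 0] by simp
  moreover have "2 powr \<alpha> > (1::real)" using a1 by (simp add: gr_one_powr)
  ultimately show w0: "w 0 = 0" by (metis mult_cancel_right1 less_irrefl)
  show C2: "Ck_on 2 (-{0}) w" using Cinf unfolding C_inf_on_def by blast
  have cont: "continuous_on (-{0}) w" using Cinf unfolding C_inf_on_def by (metis Ck_on.simps(1))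
  have "compact (w ` sphere 0 1)"
    by (rule compact_continuous_image) (auto intro: continuous_on_subset[OF cont])
  then obtain B where B: "\<forall>y\<in>w ` sphere 0 1. norm y \<le> B"
    using compact_imp_bounded bounded_iff by metis
  have wb: "\<bar>w x\<bar> \<le> B * norm x powr \<alpha>" if "x \<noteq> 0" for x
  proof -
    have "x = norm x *\<^sub>R (x /\<^sub>R norm x)" using that by simp
    then have "w x = norm x powr \<alpha> * w (x /\<^sub>R norm x)"
      using hom[rule_format, of "norm x" "x /\<^sub>R norm x"] that by simp
    moreover have "\<bar>w (x /\<^sub>R norm x)\<bar> \<le> B" using B that by (auto simp: norm_divide)
    ultimately show ?thesis
      by (simp add: abs_mult) (metis mult.commute mult_left_mono powr_ge_zero)
  qed
  show der: "(w has_derivative (\<lambda>_. 0)) (at 0)"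
    unfolding has_derivative_at
  proof (intro conjI)
    show "bounded_linear (\<lambda>_::real^'n. 0::real)" by simp
    have lim: "((\<lambda>h::real^'n. B * norm h powr (\<alpha> - 1)) \<longlongrightarrow> B * 0) (at 0)"
      by (intro tendsto_mult tendsto_const tendsto_zero_powrI)
         (use a1 in \<open>auto intro!: tendsto_eq_intros\<close>)
    show "((\<lambda>h. norm (w (0 + h) - w 0 - 0) / norm h) \<longlongrightarrow> 0) (at 0)"
    proof (rule Lim_null_comparison[OF _ lim[simplified]])
      have key: "norm (norm (w (0 + h) - w 0 - 0) / norm h) \<le> B * norm h powr (\<alpha> - 1)"
        if h: "h \<noteq> 0" for h :: "real^'n"
      proof -
        have "norm (norm (w (0 + h) - w 0 - 0) / norm h) = \<bar>w h\<bar> / norm h" using w0 by simp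
        also have "\<dots> \<le> B * norm h powr \<alpha> / norm h" using wb[OF h] h by (simp add: divide_right_mono)
        also have "\<dots> = B * norm h powr (\<alpha> - 1)" using h by (simp add: powr_diff)
        finally show ?thesis .
      qed
      show "\<forall>\<^sub>F h in at 0. norm (norm (w (0 + h) - w 0 - 0) / norm h) \<le> B * norm h powr (\<alpha> - 1)"
        unfolding eventually_at_filter by (rule always_eventually) (use key in auto)
    qed
  qed
  have "isCont w x" for x
  proof (cases "x = 0")
    case True then show ?thesis using has_derivative_continuous[OF der] by simp
  next
    case False
    then show ?thesis using cont continuous_on_eq_continuous_at[of "-{0}" w] by auto
  qed
  then show "continuous_on UNIV w" by (simp add: continuous_at_imp_continuous_on)
qed



lemma CR_axis:
  fixes f :: "real^'n::finite \<Rightarrow> real"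
  assumes "f differentiable (at (x + t0 *\<^sub>R axis i 1))"
  shows "((\<lambda>t. f (x + t *\<^sub>R axis i 1)) has_real_derivative partial i f (x + t0 *\<^sub>R axis i 1)) (at t0)"
proof -
  have "(\<Sum>j\<in>UNIV. axis i 1 $ j * partial j f (x + t0 *\<^sub>R axis i 1)) = partial i f (x + t0 *\<^sub>R axis i 1)"
    using dsum1[of i 1 "\<lambda>j. partial j f (x + t0 *\<^sub>R axis i 1)"] by (simp add: axis_def)
  with CR3[OF assms] show ?thesis by simp
qed

lemma norm_sq_expand:
  fixes a v :: "'a::real_inner"
  shows "(norm (a + t *\<^sub>R v))\<^sup>2 = (norm a)\<^sup>2 + 2*t*(a \<bullet> v) + t\<^sup>2*(norm v)\<^sup>2"
proof -
  have "(norm (a + t *\<^sub>R v))\<^sup>2 = (a + t *\<^sub>R v) \<bullet> (a + t *\<^sub>R v)" by (rule power2_norm_eq_inner)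
  also have "\<dots> = a \<bullet> a + 2*t*(a \<bullet> v) + t\<^sup>2*(v \<bullet> v)"
    by (simp add: inner_add_left inner_add_right inner_commute power2_eq_square algebra_simps)
  finally show ?thesis by (simp add: power2_norm_eq_inner)
qed

lemma norm_sq_axis:
  fixes y :: "real^'n::finite"
  shows "(norm (y + t *\<^sub>R axis i 1))\<^sup>2 = (norm y)\<^sup>2 + 2*t*(y$i) + t\<^sup>2"
  using norm_sq_expand[of y t "axis i 1"] by (simp add: inner_axis)

lemma ZC:
  fixes \<phi> g :: "real^'n::finite \<Rightarrow> real"
  assumes oU: "open U" and U0: "0 \<in> U" and \<phi>2: "Ck_on 2 U \<phi>"
    and g2: "Ck_on 2 (-{0}) g" and gc: "continuous_on UNIV g"
    and gd: "(g has_derivative (\<lambda>_. 0)) (at 0)"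
    and \<sigma>: "\<sigma> \<noteq> 0" and \<epsilon>: "\<epsilon> > 0" and \<eta>: "\<eta> > 0"
    and touch: "\<forall>x\<in>U. \<sigma>*(\<phi> 0 - g 0) \<le> \<sigma>*(\<phi> x - g x)"
  shows "(\<exists>z a. 0 < norm z \<and> norm z < \<eta> \<and> norm a < \<eta> \<and>
            (\<forall>v. \<sigma>*(qf (hess \<phi> a) v - qf (hess g z) v) + 2*\<epsilon>*(norm v)\<^sup>2 \<ge> 0))
         \<or> (\<forall>i. \<sigma> * hess \<phi> 0 $i$i = -2*\<epsilon>)"
proof -
  obtain e where e: "e > 0" "ball 0 e \<subseteq> U" using oU U0 open_contains_ball by blast
  define r where "r = min (e/3) (\<eta>/3)"
  have r: "r > 0" "2*r < e" "2*r < \<eta>" using e \<eta> by (auto simp: r_def)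
  have cb: "cball 0 (2*r) \<subseteq> U" using e r by (auto simp: subset_eq)
  have \<phi>c: "continuous_on U \<phi>"
    using \<phi>2 by (simp add: numeral_2_eq_2 differentiable_imp_continuous_on)
  have uc: "uniformly_continuous_on (cball 0 (2*r)) \<phi>"
    by (rule compact_uniformly_continuous) (use continuous_on_subset[OF \<phi>c cb] in auto)
  define \<theta> where "\<theta> = \<epsilon>*r\<^sup>2/4"
  have \<theta>: "\<theta> > 0" using \<epsilon> r by (simp add: \<theta>_def)
  have "\<theta>/(2*\<bar>\<sigma>\<bar>) > 0" using \<theta> \<sigma> by simp
  then obtain \<kappa>0 where \<kappa>0: "\<kappa>0 > 0"
    "\<forall>x\<in>cball 0 (2*r). \<forall>x'\<in>cball 0 (2*r). dist x' x < \<kappa>0 \<longrightarrow> dist (\<phi> x') (\<phi> x) < \<theta>/(2*\<bar>\<sigma>\<bar>)"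
    using uc[unfolded uniformly_continuous_on_def] by blast
  define \<kappa> where "\<kappa> = min \<kappa>0 (r/24)"
  have \<kappa>: "\<kappa> > 0" "\<kappa> \<le> \<kappa>0" "\<kappa> \<le> r/24" using \<kappa>0 r by (auto simp: \<kappa>_def)
  define m where "m h x = \<sigma>*(\<phi>(x - h) - g x) + \<epsilon>*(norm(x - h))\<^sup>2" for h x
  have mdiff: "\<bar>m h x - m 0 x\<bar> \<le> \<theta>" if h: "norm h < \<kappa>" and x: "x \<in> cball 0 r" for h x
  proof -
    have nx: "norm x \<le> r" using x by simp
    have nh: "norm h \<le> r" using h \<kappa> r by simp
    have x1: "x - h \<in> cball 0 (2*r)" "x \<in> cball 0 (2*r)"
      using nx nh norm_triangle_ineq4[of x h] r by auto
    have "dist (x - h) x < \<kappa>0" using h \<kappa> by (simp add: dist_norm)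
    then have "\<bar>\<phi>(x-h) - \<phi> x\<bar> < \<theta>/(2*\<bar>\<sigma>\<bar>)" using \<kappa>0(2) x1 by (auto simp: dist_real_def)
    then have "\<bar>\<sigma>\<bar> * \<bar>\<phi>(x-h) - \<phi> x\<bar> \<le> \<bar>\<sigma>\<bar> * (\<theta>/(2*\<bar>\<sigma>\<bar>))"
      by (intro mult_left_mono) auto
    then have p1: "\<bar>\<sigma>*(\<phi>(x-h) - \<phi> x)\<bar> \<le> \<theta>/2" using \<sigma> by (simp add: abs_mult)
    have ex: "(norm(x - h))\<^sup>2 = (norm x)\<^sup>2 + 2*(-1)*(x \<bullet> h) + (-1)\<^sup>2*(norm h)\<^sup>2"
      using norm_sq_expand[of x "-1" h] by simp
    have cs: "\<bar>x \<bullet> h\<bar> \<le> norm x * norm h" by (rule Cauchy_Schwarz_ineq2)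
    have "\<bar>(norm(x - h))\<^sup>2 - (norm x)\<^sup>2\<bar> \<le> 2*(norm x * norm h) + norm h * norm h"
    proof -
      have d: "(norm(x - h))\<^sup>2 - (norm x)\<^sup>2 = norm h * norm h - 2*(x \<bullet> h)"
        using ex by (simp add: power2_eq_square)
      have hh: "0 \<le> norm h * norm h" by simp
      show ?thesis unfolding d using cs hh by linarith
    qed
    also have "\<dots> \<le> 2*(r * norm h) + r * norm h"
      using nx nh by (intro add_mono mult_left_mono mult_right_mono) auto
    also have "\<dots> \<le> 3*r*(r/24)" using h \<kappa> r by (simp add: mult_left_mono)
    finally have "\<bar>(norm(x - h))\<^sup>2 - (norm x)\<^sup>2\<bar> \<le> r\<^sup>2/8" by (simp add: power2_eq_square)
    then have "\<epsilon> * \<bar>(norm(x - h))\<^sup>2 - (norm x)\<^sup>2\<bar> \<le> \<epsilon> * (r\<^sup>2/8)"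
      using \<epsilon> by (intro mult_left_mono) auto
    then have p2: "\<bar>\<epsilon>*((norm(x - h))\<^sup>2 - (norm x)\<^sup>2)\<bar> \<le> \<theta>/2"
      using \<epsilon> by (simp add: abs_mult \<theta>_def)
    have "m h x - m 0 x = \<sigma>*(\<phi>(x-h) - \<phi> x) + \<epsilon>*((norm(x - h))\<^sup>2 - (norm x)\<^sup>2)"
      by (simp add: m_def algebra_simps)
    then show ?thesis using p1 p2 by linarith
  qed
  have mcont: "continuous_on (cball 0 r) (m h)" if h: "norm h < \<kappa>" for h
  proof -
    have "(\<lambda>x. x - h) ` cball 0 r \<subseteq> U"
    proof
      fix y assume "y \<in> (\<lambda>x. x - h) ` cball 0 r"
      then obtain x where x: "norm x \<le> r" "y = x - h" by auto
      have "norm h \<le> r" using h \<kappa> r by simp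
      then have "norm y \<le> 2*r" using x norm_triangle_ineq4[of x h] by simp
      then show "y \<in> U" using cb by auto
    qed
    then have c1: "continuous_on (cball 0 r) (\<lambda>x. \<phi> (x - h))"
      by (intro continuous_on_compose2[OF \<phi>c]) (auto intro!: continuous_intros)
    show ?thesis unfolding m_def
      by (intro continuous_intros c1 continuous_on_subset[OF gc]) auto
  qed
  have exmin: "\<exists>z\<in>cball 0 r. \<forall>x\<in>cball 0 r. m h z \<le> m h x" if "norm h < \<kappa>" for h
    by (rule continuous_attains_inf[OF compact_cball _ mcont[OF that]]) (use r in simp)
  have zsmall: "norm z < r" if h: "norm h < \<kappa>" and z: "z \<in> cball 0 r" and zm: "\<forall>x\<in>cball 0 r. m h z \<le> m h x" for h z
  proof -
    have zU: "z \<in> U" using z cb r by auto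
    have a: "m 0 z - m 0 0 \<ge> \<epsilon>*(norm z)\<^sup>2" using touch zU by (simp add: m_def)
    have b: "m h z \<le> m h 0" using zm r by simp
    have c: "m 0 z \<le> m h z + \<theta>" "m h 0 \<le> m 0 0 + \<theta>"
      using mdiff[OF h z] mdiff[OF h, of 0] r by auto
    have "\<epsilon>*(norm z)\<^sup>2 \<le> \<epsilon>*(r\<^sup>2/2)" using a b c by (simp add: \<theta>_def)
    then have "(norm z)\<^sup>2 \<le> r\<^sup>2/2" using \<epsilon> by simp
    also have "\<dots> < r\<^sup>2" using r by simp
    finally show ?thesis using r by (simp add: power_less_imp_less_base)
  qed
  show ?thesis
  proof (cases "\<exists>h z. norm h < \<kappa> \<and> z \<in> cball 0 r \<and> z \<noteq> 0 \<and> (\<forall>x\<in>cball 0 r. m h z \<le> m h x)")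
    case True
    then obtain h z where hz: "norm h < \<kappa>" "z \<in> cball 0 r" "z \<noteq> 0" "\<forall>x\<in>cball 0 r. m h z \<le> m h x"
      by blast
    have zr: "norm z < r" using zsmall hz(1,2,4) .
    define a where "a = z - h"
    have nh: "norm h < r" using hz(1) \<kappa> r by simp
    have an: "norm a < 2*r" using zr nh norm_triangle_ineq4[of z h] by (simp add: a_def)
    have aU: "a \<in> U" using an cb by auto
    have L: "\<sigma>*(qf (hess \<phi> a) v - qf (hess g z) v) + 2*(\<epsilon>*(norm v)\<^sup>2) \<ge> 0" for v
    proof (rule L2[OF oU aU \<phi>2 _ _ g2, where \<delta> = "(r - norm z)/(norm v + 1)" and \<beta> = "2*\<epsilon>*(a \<bullet> v)"])
      show "open (-{0::real^'n})" by auto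
      show "z \<in> -{0}" using hz by auto
      have nv: "norm v + 1 > 0" using norm_ge_zero[of v] by linarith
      show "(r - norm z)/(norm v + 1) > 0" using zr nv by simp
      show "\<forall>t. \<bar>t\<bar> < (r - norm z)/(norm v+1) \<longrightarrow>
        \<sigma>*(\<phi> a - g z) \<le> \<sigma>*(\<phi>(a + t *\<^sub>R v) - g(z + t *\<^sub>R v)) + 2*\<epsilon>*(a \<bullet> v)*t + \<epsilon>*(norm v)\<^sup>2*t\<^sup>2"
      proof (intro allI impI)
        fix t assume t: "\<bar>t\<bar> < (r - norm z)/(norm v+1)"
        have "\<bar>t\<bar> * norm v \<le> \<bar>t\<bar> * (norm v + 1)" by (simp add: mult_left_mono)
        also have "\<dots> < r - norm z" using t nv by (simp add: less_divide_eq)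
        finally have "norm (z + t *\<^sub>R v) \<le> r"
          using norm_triangle_ineq[of z "t *\<^sub>R v"] by simp
        then have "m h z \<le> m h (z + t *\<^sub>R v)" using hz(4) by simp
        moreover have "z + t *\<^sub>R v - h = a + t *\<^sub>R v" by (simp add: a_def algebra_simps)
        ultimately have "\<sigma>*(\<phi> a - g z) + \<epsilon>*(norm a)\<^sup>2 \<le> \<sigma>*(\<phi>(a + t *\<^sub>R v) - g(z + t *\<^sub>R v)) + \<epsilon>*(norm (a + t *\<^sub>R v))\<^sup>2"
          by (simp add: m_def a_def)
        then show "\<sigma>*(\<phi> a - g z) \<le> \<sigma>*(\<phi>(a + t *\<^sub>R v) - g(z + t *\<^sub>R v)) + 2*\<epsilon>*(a \<bullet> v)*t + \<epsilon>*(norm v)\<^sup>2*t\<^sup>2"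
          unfolding norm_sq_expand by (simp add: algebra_simps)
      qed
    qed
    show ?thesis
    proof (rule disjI1, intro exI conjI allI)
      show "0 < norm z" using hz(3) by simp
      show "norm z < \<eta>" using zr r by simp
      show "norm a < \<eta>" using an r by simp
      fix v show "\<sigma>*(qf (hess \<phi> a) v - qf (hess g z) v) + 2*\<epsilon>*(norm v)\<^sup>2 \<ge> 0"
        using L[of v] by (simp add: mult.assoc)
    qed
  next
    case False
    have pg: "partial i g 0 = 0" for i using CR1[OF gd] by simp
    have pd: "\<sigma> * partial i \<phi> y = -2*\<epsilon>*(y$i)" if y: "norm y < \<kappa>" for i y
    proof -
      define h where "h = -y"
      have hk: "norm h < \<kappa>" using y by (simp add: h_def)
      obtain z where z: "z \<in> cball 0 r" "\<forall>x\<in>cball 0 r. m h z \<le> m h x" using exmin[OF hk] by blast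
      have "z = 0" using False hk z by blast
      then have min0: "\<forall>x\<in>cball 0 r. m h 0 \<le> m h x" using z by simp
      have yU: "y \<in> U" using y \<kappa> r cb by auto
      have d\<phi>: "((\<lambda>t. \<phi> (y + t *\<^sub>R axis i 1)) has_real_derivative partial i \<phi> y) (at 0)"
        using CR_axis[of \<phi> y 0 i] Ck2_D(1)[OF \<phi>2 oU yU] by simp
      have dg: "((\<lambda>t. g (t *\<^sub>R axis i 1)) has_real_derivative partial i g 0) (at 0)"
      proof -
        have "g differentiable (at (0 + 0 *\<^sub>R axis i 1))" using gd by (auto simp: differentiable_def)
        from CR_axis[OF this] show ?thesis by simp
      qed
      define G where "G t = m h (t *\<^sub>R axis i 1)" for t
      have Geq: "G = (\<lambda>t. \<sigma>*(\<phi>(y + t *\<^sub>R axis i 1) - g(t *\<^sub>R axis i 1)) + \<epsilon>*((norm y)\<^sup>2 + 2*t*(y$i) + t\<^sup>2))"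
      proof
        fix t
        have e: "t *\<^sub>R axis i 1 - h = y + t *\<^sub>R axis i 1" by (simp add: h_def)
        show "G t = \<sigma>*(\<phi>(y + t *\<^sub>R axis i 1) - g(t *\<^sub>R axis i 1)) + \<epsilon>*((norm y)\<^sup>2 + 2*t*(y$i) + t\<^sup>2)"
          unfolding G_def m_def e norm_sq_axis by simp
      qed
      have Gd: "(G has_real_derivative (\<sigma>*(partial i \<phi> y - partial i g 0) + \<epsilon>*(2*(y$i)))) (at 0)"
        unfolding Geq by (auto intro!: derivative_eq_intros d\<phi> dg)
      have "\<sigma>*(partial i \<phi> y - partial i g 0) + \<epsilon>*(2*(y$i)) = 0"
      proof (rule DERIV_local_min[OF Gd r(1)])
        show "\<forall>t. \<bar>0 - t\<bar> < r \<longrightarrow> G 0 \<le> G t"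
        proof (intro allI impI)
          fix t :: real assume "\<bar>0 - t\<bar> < r"
          then have "(t *\<^sub>R axis i 1 :: real^'n) \<in> cball 0 r" by simp
          then show "G 0 \<le> G t" using min0 by (simp add: G_def)
        qed
      qed
      then show ?thesis using pg by (simp add: algebra_simps)
    qed
    have "\<sigma> * hess \<phi> 0 $i$i = -2*\<epsilon>" for i
    proof -
      have "((\<lambda>t. partial i \<phi> (0 + t *\<^sub>R axis i 1)) has_real_derivative (-2*\<epsilon>/\<sigma>)) (at 0)"
      proof (rule has_field_derivative_transform_within_open[where S = "ball 0 \<kappa>" and f = "\<lambda>t. -2*\<epsilon>*t/\<sigma>"])
        show "((\<lambda>t. -2*\<epsilon>*t/\<sigma>) has_real_derivative (-2*\<epsilon>/\<sigma>)) (at 0)"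
          using \<sigma> by (auto intro!: derivative_eq_intros)
        show "open (ball (0::real) \<kappa>)" by simp
        show "(0::real) \<in> ball 0 \<kappa>" using \<kappa> by simp
        fix t :: real assume "t \<in> ball 0 \<kappa>"
        then have "norm (t *\<^sub>R axis i 1 :: real^'n) < \<kappa>" by simp
        then have "\<sigma> * partial i \<phi> (t *\<^sub>R axis i 1) = -2*\<epsilon>*t" using pd by simp
        then show "-2*\<epsilon>*t/\<sigma> = partial i \<phi> (0 + t *\<^sub>R axis i 1)" using \<sigma> by (simp add: field_simps)
      qed
      moreover have "partial i (partial i \<phi>) 0 = deriv (\<lambda>t. partial i \<phi> (0 + t *\<^sub>R axis i 1)) 0"
        by (rule partial_def)
      ultimately have "partial i (partial i \<phi>) 0 = -2*\<epsilon>/\<sigma>" using DERIV_imp_deriv by metis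
      then show ?thesis using \<sigma> by (simp add: hess_def)
    qed
    then show ?thesis by blast
  qed
qed



lemma ZL:
  fixes \<phi> g :: "real^'n::finite \<Rightarrow> real"
  assumes oU: "open U" and U0: "0 \<in> U" and \<phi>2: "Ck_on 2 U \<phi>"
    and g2: "Ck_on 2 (-{0}) g" and gc: "continuous_on UNIV g"
    and gd: "(g has_derivative (\<lambda>_. 0)) (at 0)"
    and \<sigma>: "\<sigma> \<noteq> 0" and \<epsilon>: "\<epsilon> > 0" and \<eta>: "\<eta> > 0"
    and touch: "\<forall>x\<in>U. \<sigma>*(\<phi> 0 - g 0) \<le> \<sigma>*(\<phi> x - g x)"
  shows "\<exists>z a. 0 < norm z \<and> norm z < \<eta> \<and> norm a < \<eta> \<and>
            (\<forall>v. \<sigma>*(qf (hess \<phi> a) v - qf (hess g z) v) + 2*\<epsilon>*(norm v)\<^sup>2 \<ge> 0)"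
proof -
  have e2: "\<epsilon>/2 > 0" using \<epsilon> by simp
  note Z1 = ZC[OF oU U0 \<phi>2 g2 gc gd \<sigma> \<epsilon> \<eta> touch]
  note Z2 = ZC[OF oU U0 \<phi>2 g2 gc gd \<sigma> e2 \<eta> touch]
  show ?thesis
  proof (cases "\<forall>i. \<sigma> * hess \<phi> 0 $i$i = -2*\<epsilon>")
    case True
    show ?thesis
    proof (cases "\<forall>i. \<sigma> * hess \<phi> 0 $i$i = -2*(\<epsilon>/2)")
      case True2: True
      have "-2*\<epsilon> = -2*(\<epsilon>/2)" using True[rule_format, of undefined] True2[rule_format, of undefined] by simp
      then show ?thesis using \<epsilon> by simp
    next
      case False
      then obtain z a where za: "0 < norm z" "norm z < \<eta>" "norm a < \<eta>"
        "\<forall>v. \<sigma>*(qf (hess \<phi> a) v - qf (hess g z) v) + 2*(\<epsilon>/2)*(norm v)\<^sup>2 \<ge> 0"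
        using Z2 by blast
      have "\<forall>v. \<sigma>*(qf (hess \<phi> a) v - qf (hess g z) v) + 2*\<epsilon>*(norm v)\<^sup>2 \<ge> 0"
      proof
        fix v :: "real^'n"
        have "2*(\<epsilon>/2)*(norm v)\<^sup>2 \<le> 2*\<epsilon>*(norm v)\<^sup>2" using \<epsilon> by (simp add: mult_right_mono)
        then show "\<sigma>*(qf (hess \<phi> a) v - qf (hess g z) v) + 2*\<epsilon>*(norm v)\<^sup>2 \<ge> 0" using za(4)[rule_format, of v] by linarith
      qed
      then show ?thesis using za by blast
    qed
  next
    case False
    then show ?thesis using Z1 by blast
  qed
qed

lemma line_min:
  assumes "open U" "x0 \<in> U" "\<forall>x\<in>U. \<Phi> x0 \<le> \<Phi> x"
  shows "\<exists>\<delta>>0. \<forall>t. \<bar>t\<bar> < \<delta> \<longrightarrow> \<Phi> x0 \<le> \<Phi> (x0 + t *\<^sub>R (v::'a::real_normed_vector))"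
proof -
  obtain e where e: "e > 0" "ball x0 e \<subseteq> U" using assms open_contains_ball by blast
  have nv: "norm v + 1 > 0" using norm_ge_zero[of v] by linarith
  show ?thesis
  proof (intro exI[of _ "e/(norm v + 1)"] conjI allI impI)
    show "e/(norm v + 1) > 0" using e nv by simp
    fix t assume t: "\<bar>t\<bar> < e/(norm v + 1)"
    have "\<bar>t\<bar> * norm v \<le> \<bar>t\<bar> * (norm v + 1)" by (simp add: mult_left_mono)
    also have "\<dots> < e" using t nv by (simp add: less_divide_eq)
    finally have "x0 + t *\<^sub>R v \<in> U" using e(2) by (auto simp: dist_norm)
    then show "\<Phi> x0 \<le> \<Phi> (x0 + t *\<^sub>R v)" using assms(3) by blast
  qed
qed

lemma hess_cont:
  fixes \<phi> :: "real^'n::finite \<Rightarrow> real"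
  assumes "Ck_on 2 U \<phi>" "open U" "a0 \<in> U" "\<rho> > 0"
  shows "\<exists>\<eta>>0. \<forall>a. norm (a - a0) < \<eta> \<longrightarrow> nm (hess \<phi> a - hess \<phi> a0) < \<rho>"
proof -
  have ic: "isCont (partial i (partial j \<phi>)) a0" for i j
    using Ck2_D(3)[OF assms(1-3), of i j] assms(2,3) continuous_on_eq_continuous_at by blast
  have "((\<lambda>a. nm (hess \<phi> a - hess \<phi> a0)) \<longlongrightarrow> nm (hess \<phi> a0 - hess \<phi> a0)) (at a0)"
    unfolding nm_def hess_def
    by (intro tendsto_intros) (use ic isCont_def in \<open>auto simp: isCont_def\<close>)
  then have "((\<lambda>a. nm (hess \<phi> a - hess \<phi> a0)) \<longlongrightarrow> 0) (at a0)" by (simp add: nm_def)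
  then have "\<forall>\<^sub>F a in at a0. nm (hess \<phi> a - hess \<phi> a0) < \<rho>"
    using assms(4) by (metis order_tendstoD(2))
  then obtain d where d: "d > 0" "\<forall>a. 0 < dist a a0 \<and> dist a a0 < d \<longrightarrow> nm (hess \<phi> a - hess \<phi> a0) < \<rho>"
    unfolding eventually_at by auto
  show ?thesis
  proof (intro exI[of _ d] conjI allI impI)
    fix a assume a: "norm (a - a0) < d"
    show "nm (hess \<phi> a - hess \<phi> a0) < \<rho>"
    proof (cases "a = a0")
      case True then show ?thesis using assms(4) by (simp add: nm_def)
    next
      case False then show ?thesis using d a by (simp add: dist_norm)
    qed
  qed (use d in simp)
qed

lemma nm_swap: "nm (A - B) = nm (B - A)"
  unfolding nm_def by (simp add: abs_minus_commute)



theorem lemma5p1: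
  fixes w :: "real^'n::finite \<Rightarrow> real" and C \<alpha> :: real
  assumes "C > 0"
    and "1 < \<alpha>" and "\<alpha> \<le> 2"
    and "C_inf_on (- {0}) w"
    and "\<forall>t>0. \<forall>x. w (t *\<^sub>R x) = t powr \<alpha> * w x"
    and "\<forall>x y. 0 < norm x \<and> norm x \<le> 1 \<and> 0 < norm y \<and> norm y \<le> 1 \<longrightarrow>
           (\<exists>A\<in>K C. trace (A ** hess w x) = 0 \<and> trace (A ** hess w y) = 0)"
  shows "\<exists>\<B>. \<B> \<noteq> {} \<and> (\<forall>S\<in>\<B>. S \<noteq> {} \<and> S \<subseteq> K C) \<and>
           viscosity_solution (ball 0 1) (isaacs \<B>) w"
proof -
  note C = assms(1)
  note wf = w_facts[OF assms(2,4,5)]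
  define P where "P = {y::real^'n. 0 < norm y \<and> norm y \<le> 1}"
  have P0: "P \<noteq> {}"
  proof -
    have "axis undefined 1 \<in> P" by (simp add: P_def)
    then show ?thesis by blast
  qed
  define Ax where "Ax x y = (SOME A. A \<in> K C \<and> trace (A ** hess w x) = 0 \<and> trace (A ** hess w y) = 0)" for x y
  have AxP: "Ax x y \<in> K C \<and> trace (Ax x y ** hess w x) = 0 \<and> trace (Ax x y ** hess w y) = 0"
    if "x \<in> P" "y \<in> P" for x y
  proof -
    have "\<exists>A. A \<in> K C \<and> trace (A ** hess w x) = 0 \<and> trace (A ** hess w y) = 0"
      using assms(6) that by (auto simp: P_def)
    then show ?thesis unfolding Ax_def by (rule someI_ex)
  qed
  define B where "B = (\<lambda>y. (\<lambda>x. Ax x y) ` P) ` P"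
  define T where "T M x y = trace (Ax x y ** M)" for M x y
  have FB: "isaacs B M = SI P (T M)" for M
    unfolding isaacs_def B_def SI_def T_def by (simp add: image_image)
  have Tb: "\<forall>x\<in>P. \<forall>y\<in>P. \<bar>T M x y\<bar> \<le> C * nm M" for M
    unfolding T_def using trace_bound[OF C] AxP by blast
  have F1: "isaacs B (hess w z) = 0" if z: "z \<in> P" for z
  proof -
    have "SI P (T (hess w z)) \<le> 0"
    proof (rule SI_le0[OF P0 Tb], intro ballI)
      fix y assume "y \<in> P"
      then have "T (hess w z) z y = 0" using AxP[OF z] by (simp add: T_def)
      then show "\<exists>x\<in>P. T (hess w z) x y \<le> 0" using z by force
    qed
    moreover have "SI P (T (hess w z)) \<ge> 0"
      by (rule SI_ge0[OF P0 Tb z]) (use AxP z in \<open>auto simp: T_def\<close>)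
    ultimately show ?thesis unfolding FB by simp
  qed
  have Fmono: "isaacs B M \<le> isaacs B M'" if "\<forall>v. qf (M' - M) v \<ge> 0" for M M'
  proof -
    have "SI P (T M) \<le> SI P (T M') + 0"
    proof (rule SI_mono[OF P0 Tb Tb])
      show "\<forall>x\<in>P. \<forall>y\<in>P. T M x y \<le> T M' x y + 0"
        using TI[OF C _ that] AxP by (auto simp: T_def trace_diffR)
    qed
    then show ?thesis unfolding FB by simp
  qed
  have Fshift: "isaacs B M \<le> isaacs B M' + C * nm (M - M')" for M M'
  proof -
    have "SI P (T M) \<le> SI P (T M') + C * nm (M - M')"
    proof (rule SI_mono[OF P0 Tb Tb])
      show "\<forall>x\<in>P. \<forall>y\<in>P. T M x y \<le> T M' x y + C * nm (M - M')"
      proof (intro ballI)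
        fix x y assume "x \<in> P" "y \<in> P"
        then have "\<bar>trace (Ax x y ** (M - M'))\<bar> \<le> C * nm (M - M')" using trace_bound[OF C] AxP by blast
        then show "T M x y \<le> T M' x y + C * nm (M - M')" by (simp add: T_def trace_diffR)
      qed
    qed
    then show ?thesis unfolding FB by simp
  qed
  have Bne: "B \<noteq> {}" using P0 by (simp add: B_def)
  have BK: "\<forall>S\<in>B. S \<noteq> {} \<and> S \<subseteq> K C" using P0 AxP by (auto simp: B_def)
  have wcont: "continuous_on (ball 0 1) w" using continuous_on_subset[OF wf(4)] by blast
  have ncard: "real CARD('n) > 0" by simp
  define n where "n = real CARD('n)"
  have n: "n > 0" using ncard by (simp add: n_def)
  have sub: "viscosity_subsolution (ball 0 1) (isaacs B) w"
    unfolding viscosity_subsolution_def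
  proof (intro conjI wcont ballI allI impI)
    fix x0 U \<phi> assume x0: "x0 \<in> ball (0::real^'n) 1"
      and H: "open U \<and> x0 \<in> U \<and> U \<subseteq> ball 0 1 \<and> Ck_on 2 U \<phi> \<and> (\<forall>x\<in>U. w x - \<phi> x \<le> w x0 - \<phi> x0)"
    then have oU: "open U" and x0U: "x0 \<in> U" and \<phi>2: "Ck_on 2 U \<phi>"
      and tch: "\<forall>x\<in>U. \<phi> x0 - w x0 \<le> \<phi> x - w x" by auto
    show "isaacs B (hess \<phi> x0) \<ge> 0"
    proof (cases "x0 = 0")
      case False
      have x0P: "x0 \<in> P" using x0 False by (simp add: P_def)
      have "\<forall>v. qf (hess \<phi> x0 - hess w x0) v \<ge> 0"
      proof
        fix v :: "real^'n"
        obtain \<delta> where \<delta>: "\<delta> > 0" "\<forall>t. \<bar>t\<bar> < \<delta> \<longrightarrow> \<phi> x0 - w x0 \<le> \<phi> (x0 + t *\<^sub>R v) - w (x0 + t *\<^sub>R v)"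
          using line_min[OF oU x0U, of "\<lambda>x. \<phi> x - w x" v] tch by auto
        have "1*(qf (hess \<phi> x0) v - qf (hess w x0) v) + 2*0 \<ge> 0"
        proof (rule L2[OF oU x0U \<phi>2 _ _ wf(2) \<delta>(1), where \<beta>=0])
          show "open (-{0::real^'n})" by auto
          show "x0 \<in> -{0}" using False by simp
          show "\<forall>t. \<bar>t\<bar> < \<delta> \<longrightarrow> 1*(\<phi> x0 - w x0) \<le> 1*(\<phi> (x0 + t *\<^sub>R v) - w (x0 + t *\<^sub>R v)) + 0*t + 0*t\<^sup>2"
            using \<delta>(2) by simp
        qed
        then show "qf (hess \<phi> x0 - hess w x0) v \<ge> 0" by (simp add: qf_diff)
      qed
      then have "isaacs B (hess w x0) \<le> isaacs B (hess \<phi> x0)" by (rule Fmono)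
      with F1[OF x0P] show ?thesis by simp
    next
      case True
      have U0: "0 \<in> U" using x0U True by simp
      have touch0: "\<forall>x\<in>U. 1*(\<phi> 0 - w 0) \<le> 1*(\<phi> x - w x)" using tch True by simp
      show ?thesis
      proof (rule ccontr)
        assume "\<not> isaacs B (hess \<phi> x0) \<ge> 0"
        then have neg: "isaacs B (hess \<phi> 0) < 0" using True by simp
        define d where "d = - isaacs B (hess \<phi> 0)"
        have d: "d > 0" using neg by (simp add: d_def)
        define \<epsilon> where "\<epsilon> = d/(8*C*n)"
        define \<rho> where "\<rho> = d/(4*C)"
        have \<epsilon>: "\<epsilon> > 0" and \<rho>: "\<rho> > 0" using d C n by (simp_all add: \<epsilon>_def \<rho>_def)
        obtain \<eta>0 where \<eta>0: "\<eta>0 > 0" "\<forall>a. norm (a - 0) < \<eta>0 \<longrightarrow> nm (hess \<phi> a - hess \<phi> 0) < \<rho>"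
          using hess_cont[OF \<phi>2 oU U0 \<rho>] by blast
        define \<eta> where "\<eta> = min \<eta>0 1"
        have \<eta>: "\<eta> > 0" using \<eta>0 by (simp add: \<eta>_def)
        obtain z a where za: "0 < norm z" "norm z < \<eta>" "norm a < \<eta>"
          "\<forall>v. 1*(qf (hess \<phi> a) v - qf (hess w z) v) + 2*\<epsilon>*(norm v)\<^sup>2 \<ge> 0"
          using ZL[OF oU U0 \<phi>2 wf(2) wf(4) wf(3) one_neq_zero \<epsilon> \<eta> touch0] by blast
        have zP: "z \<in> P" using za \<eta> by (simp add: P_def \<eta>_def)
        define M where "M = hess \<phi> a + (2*\<epsilon>) *\<^sub>R mat 1"
        have "\<forall>v. qf (M - hess w z) v \<ge> 0"
        proof
          fix v :: "real^'n"
          show "qf (M - hess w z) v \<ge> 0"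
            using za(4)[rule_format, of v] unfolding M_def qf_diff qf_add qf_scal by (simp add: algebra_simps)
        qed
        then have "isaacs B (hess w z) \<le> isaacs B M" by (rule Fmono)
        then have M0: "isaacs B M \<ge> 0" using F1[OF zP] by simp
        have eqM: "M - hess \<phi> 0 = (hess \<phi> a - hess \<phi> 0) + (2*\<epsilon>) *\<^sub>R mat 1" by (simp add: M_def)
        have "nm (M - hess \<phi> 0) \<le> nm (hess \<phi> a - hess \<phi> 0) + n * \<bar>2*\<epsilon>\<bar>"
          unfolding eqM using nm_add[of "hess \<phi> a - hess \<phi> 0" "(2*\<epsilon>) *\<^sub>R mat 1"]
          by (simp add: n_def nm_scal)
        also have "\<dots> < \<rho> + n * (2*\<epsilon>)" using \<eta>0(2) za(3) \<epsilon> by (simp add: \<eta>_def)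
        finally have nmb: "nm (M - hess \<phi> 0) < \<rho> + n * (2*\<epsilon>)" .
        have "C * (\<rho> + n * (2*\<epsilon>)) = d/2" using C n by (simp add: \<rho>_def \<epsilon>_def field_simps)
        moreover have "C * nm (M - hess \<phi> 0) < C * (\<rho> + n * (2*\<epsilon>))" using nmb C by simp
        moreover have "isaacs B M \<le> isaacs B (hess \<phi> 0) + C * nm (M - hess \<phi> 0)" by (rule Fshift)
        ultimately show False using M0 d by (simp add: d_def)
      qed
    qed
  qed
  have super: "viscosity_supersolution (ball 0 1) (isaacs B) w"
    unfolding viscosity_supersolution_def
  proof (intro conjI wcont ballI allI impI)
    fix x0 U \<phi> assume x0: "x0 \<in> ball (0::real^'n) 1"
      and H: "open U \<and> x0 \<in> U \<and> U \<subseteq> ball 0 1 \<and> Ck_on 2 U \<phi> \<and> (\<forall>x\<in>U. w x0 - \<phi> x0 \<le> w x - \<phi> x)"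
    then have oU: "open U" and x0U: "x0 \<in> U" and \<phi>2: "Ck_on 2 U \<phi>"
      and tch: "\<forall>x\<in>U. w x0 - \<phi> x0 \<le> w x - \<phi> x" by auto
    show "isaacs B (hess \<phi> x0) \<le> 0"
    proof (cases "x0 = 0")
      case False
      have x0P: "x0 \<in> P" using x0 False by (simp add: P_def)
      have "\<forall>v. qf (hess w x0 - hess \<phi> x0) v \<ge> 0"
      proof
        fix v :: "real^'n"
        obtain \<delta> where \<delta>: "\<delta> > 0" "\<forall>t. \<bar>t\<bar> < \<delta> \<longrightarrow> w x0 - \<phi> x0 \<le> w (x0 + t *\<^sub>R v) - \<phi> (x0 + t *\<^sub>R v)"
          using line_min[OF oU x0U, of "\<lambda>x. w x - \<phi> x" v] tch by auto
        have "1*(qf (hess w x0) v - qf (hess \<phi> x0) v) + 2*0 \<ge> 0"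
        proof (rule L2[OF _ _ wf(2) oU x0U \<phi>2 \<delta>(1), where \<beta>=0])
          show "open (-{0::real^'n})" by auto
          show "x0 \<in> -{0}" using False by simp
          show "\<forall>t. \<bar>t\<bar> < \<delta> \<longrightarrow> 1*(w x0 - \<phi> x0) \<le> 1*(w (x0 + t *\<^sub>R v) - \<phi> (x0 + t *\<^sub>R v)) + 0*t + 0*t\<^sup>2"
            using \<delta>(2) by simp
        qed
        then show "qf (hess w x0 - hess \<phi> x0) v \<ge> 0" by (simp add: qf_diff)
      qed
      then have "isaacs B (hess \<phi> x0) \<le> isaacs B (hess w x0)" by (rule Fmono)
      with F1[OF x0P] show ?thesis by simp
    next
      case True
      have U0: "0 \<in> U" using x0U True by simp
      have touch0: "\<forall>x\<in>U. (-1)*(\<phi> 0 - w 0) \<le> (-1)*(\<phi> x - w x)" using tch True by simp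
      show ?thesis
      proof (rule ccontr)
        assume "\<not> isaacs B (hess \<phi> x0) \<le> 0"
        then have pos: "isaacs B (hess \<phi> 0) > 0" using True by simp
        define d where "d = isaacs B (hess \<phi> 0)"
        have d: "d > 0" using pos by (simp add: d_def)
        define \<epsilon> where "\<epsilon> = d/(8*C*n)"
        define \<rho> where "\<rho> = d/(4*C)"
        have \<epsilon>: "\<epsilon> > 0" and \<rho>: "\<rho> > 0" using d C n by (simp_all add: \<epsilon>_def \<rho>_def)
        obtain \<eta>0 where \<eta>0: "\<eta>0 > 0" "\<forall>a. norm (a - 0) < \<eta>0 \<longrightarrow> nm (hess \<phi> a - hess \<phi> 0) < \<rho>"
          using hess_cont[OF \<phi>2 oU U0 \<rho>] by blast
        define \<eta> where "\<eta> = min \<eta>0 1"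
        have \<eta>: "\<eta> > 0" using \<eta>0 by (simp add: \<eta>_def)
        have m1: "(-1::real) \<noteq> 0" by simp
        obtain z a where za: "0 < norm z" "norm z < \<eta>" "norm a < \<eta>"
          "\<forall>v. (-1)*(qf (hess \<phi> a) v - qf (hess w z) v) + 2*\<epsilon>*(norm v)\<^sup>2 \<ge> 0"
          using ZL[OF oU U0 \<phi>2 wf(2) wf(4) wf(3) m1 \<epsilon> \<eta> touch0] by blast
        have zP: "z \<in> P" using za \<eta> by (simp add: P_def \<eta>_def)
        define M where "M = hess \<phi> a - (2*\<epsilon>) *\<^sub>R mat 1"
        have "\<forall>v. qf (hess w z - M) v \<ge> 0"
        proof
          fix v :: "real^'n"
          show "qf (hess w z - M) v \<ge> 0"
            using za(4)[rule_format, of v] unfolding M_def qf_diff qf_add qf_scal by (simp add: algebra_simps)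
        qed
        then have "isaacs B M \<le> isaacs B (hess w z)" by (rule Fmono)
        then have M0: "isaacs B M \<le> 0" using F1[OF zP] by simp
        have eqM: "hess \<phi> 0 - M = (hess \<phi> 0 - hess \<phi> a) + (2*\<epsilon>) *\<^sub>R mat 1" by (simp add: M_def)
        have "nm (hess \<phi> 0 - M) \<le> nm (hess \<phi> 0 - hess \<phi> a) + n * \<bar>2*\<epsilon>\<bar>"
          unfolding eqM using nm_add[of "hess \<phi> 0 - hess \<phi> a" "(2*\<epsilon>) *\<^sub>R mat 1"]
          by (simp add: n_def nm_scal)
        also have "\<dots> < \<rho> + n * (2*\<epsilon>)" using \<eta>0(2) za(3) \<epsilon> nm_swap[of "hess \<phi> 0" "hess \<phi> a"]
          by (simp add: \<eta>_def)
        finally have nmb: "nm (hess \<phi> 0 - M) < \<rho> + n * (2*\<epsilon>)" .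
        have "C * (\<rho> + n * (2*\<epsilon>)) = d/2" using C n by (simp add: \<rho>_def \<epsilon>_def field_simps)
        moreover have "C * nm (hess \<phi> 0 - M) < C * (\<rho> + n * (2*\<epsilon>))" using nmb C by simp
        moreover have "isaacs B (hess \<phi> 0) \<le> isaacs B M + C * nm (hess \<phi> 0 - M)" by (rule Fshift)
        ultimately show False using M0 d by (simp add: d_def)
      qed
    qed
  qed
  show ?thesis
    using Bne BK sub super unfolding viscosity_solution_def by blast
qed


end
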